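(* The Kahan map $\mathcal K$, $\tilde x_i=x_i\dfrac{(1-\epsilon H)(1+\epsilon H)}{(1-\epsilon H+2\epsilon v_{i-1})(1-\epsilon H+2\epsilon v_i)}$ ($i=1,\dots,n$), is a Poisson map with respect to the bracket $\{x_i,x_j\}=x_ix_j$ ($i<j$); that is, $\{\tilde x_i,\tilde x_j\}=\tilde x_i\tilde x_j$ for all $1\le i<j\le n$.
   Context: $(a_1,\dots,a_n)\in\mathbb R^n\setminus\{0\}$, $\epsilon>0$, $H=a_1x_1+\dots+a_nx_n$, $v_0:=0$, $v_i:=a_1x_1+\dots+a_ix_i$. The Poisson bracket on $\mathbb R^n$ is $\{x_i,x_j\}=x_ix_j$ for $1\le i<j\le n$, extended by skew-symmetry and the Leibniz rule to rational functions. *)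

theory Defs
  imports "HOL-Analysis.Analysis"
begin

text \<open>Points of R^n are represented as functions nat => real; only the
coordinates 1..n are used.\<close>

definition partial :: "((nat \<Rightarrow> real) \<Rightarrow> real) \<Rightarrow> nat \<Rightarrow> (nat \<Rightarrow> real) \<Rightarrow> real" where
  "partial f k x = deriv (\<lambda>t. f (x(k := t))) (x k)"

definition pstruct :: "nat \<Rightarrow> nat \<Rightarrow> (nat \<Rightarrow> real) \<Rightarrow> real" where
  "pstruct i j x = (if i < j then x i * x j else if j < i then - (x i * x j) else 0)"

text \<open>Poisson bracket of (rational) functions, via the bivector and partial derivatives
(this is the extension of the bracket by skew-symmetry and Leibniz rule).\<close>
definition pbracket :: "nat \<Rightarrow> ((nat \<Rightarrow> real) \<Rightarrow> real) \<Rightarrow> ((nat \<Rightarrow> real) \<Rightarrow> real)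
    \<Rightarrow> (nat \<Rightarrow> real) \<Rightarrow> real" where
  "pbracket n f g x = (\<Sum>i=1..n. \<Sum>j=1..n. pstruct i j x * partial f i x * partial g j x)"

definition vv :: "(nat \<Rightarrow> real) \<Rightarrow> nat \<Rightarrow> (nat \<Rightarrow> real) \<Rightarrow> real" where
  "vv a i x = (\<Sum>k=1..i. a k * x k)"

definition HH :: "nat \<Rightarrow> (nat \<Rightarrow> real) \<Rightarrow> (nat \<Rightarrow> real) \<Rightarrow> real" where
  "HH n a x = vv a n x"

definition kahan :: "nat \<Rightarrow> (nat \<Rightarrow> real) \<Rightarrow> real \<Rightarrow> nat \<Rightarrow> (nat \<Rightarrow> real) \<Rightarrow> real" where
  "kahan n a \<epsilon> i x = x i * ((1 - \<epsilon> * HH n a x) * (1 + \<epsilon> * HH n a x)) /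
     ((1 - \<epsilon> * HH n a x + 2 * \<epsilon> * vv a (i - 1) x) * (1 - \<epsilon> * HH n a x + 2 * \<epsilon> * vv a i x))"

end

theory Submission
  imports Defs
begin

definition BB :: "nat \<Rightarrow> (nat \<Rightarrow> real) \<Rightarrow> (nat \<Rightarrow> real) \<Rightarrow> (nat \<Rightarrow> real) \<Rightarrow> real" where
  "BB n x u w = (\<Sum>k=1..n. \<Sum>l=1..n. pstruct k l x * u k * w l)"

definition ev :: "nat \<Rightarrow> nat \<Rightarrow> real" where "ev i k = (if k = i then 1 else 0)"
definition gv :: "(nat \<Rightarrow> real) \<Rightarrow> nat \<Rightarrow> nat \<Rightarrow> real" where "gv a m k = (if k \<le> m then a k else 0)"

lemma vv_upd:
  assumes "1 \<le> k"
  shows "vv a m (x(k:=t)) = vv a m x + gv a m k * (t - x k)"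
proof -
  have "vv a m (x(k:=t)) - vv a m x = (\<Sum>l=1..m. (if l = k then a k * (t - x k) else 0))"
    unfolding vv_def by (subst sum_subtractf[symmetric]) (rule sum.cong, auto simp: algebra_simps)
  also have "\<dots> = gv a m k * (t - x k)" using assms by (simp add: gv_def)
  finally show ?thesis by simp
qed

lemma deriv_rat:
  fixes X0 \<xi> A0 \<alpha> B0 \<beta> E0 \<gamma> G0 \<delta> t0 :: real
  assumes "E0 \<noteq> 0" "G0 \<noteq> 0"
  shows "((\<lambda>t. (X0 + \<xi>*(t-t0)) * ((A0+\<alpha>*(t-t0))*(B0+\<beta>*(t-t0))) / ((E0+\<gamma>*(t-t0))*(G0+\<delta>*(t-t0))))
     has_real_derivative (\<xi>*(A0*B0)/(E0*G0) + X0*(\<alpha>*B0+A0*\<beta>)/(E0*G0) - X0*(A0*B0)*(\<gamma>*G0+E0*\<delta>)/(E0*G0)^2)) (at t0)"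
  using assms
  apply (auto intro!: derivative_eq_intros)
  apply (simp add: field_simps power2_eq_square)
  done

definition Ck :: "real \<Rightarrow> real \<Rightarrow> real \<Rightarrow> real \<Rightarrow> real" where
  "Ck \<epsilon> H V0 V1 = ((1-\<epsilon>*H)*(1+\<epsilon>*H))/((1-\<epsilon>*H+2*\<epsilon>*V0)*(1-\<epsilon>*H+2*\<epsilon>*V1))"
definition dN :: "real \<Rightarrow> real \<Rightarrow> real \<Rightarrow> real \<Rightarrow> real" where
  "dN \<epsilon> H V0 V1 = 1/(1+\<epsilon>*H) - 1/(1-\<epsilon>*H) + 1/(1-\<epsilon>*H+2*\<epsilon>*V0) + 1/(1-\<epsilon>*H+2*\<epsilon>*V1)"

lemma grad_kahan:
  assumes k: "1 \<le> k" and nzA: "1 - \<epsilon> * HH n a x \<noteq> 0" and nzB: "1 + \<epsilon> * HH n a x \<noteq> 0" and nz0: "1 - \<epsilon> * HH n a x + 2 * \<epsilon> * vv a (i-1) x \<noteq> 0"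
    and nz1: "1 - \<epsilon> * HH n a x + 2 * \<epsilon> * vv a i x \<noteq> 0"
  shows "partial (kahan n a \<epsilon> i) k x =
     Ck \<epsilon> (HH n a x) (vv a (i-1) x) (vv a i x) * ev i k
   + (Ck \<epsilon> (HH n a x) (vv a (i-1) x) (vv a i x) * \<epsilon> * x i * (-2/(1 - \<epsilon> * HH n a x + 2 * \<epsilon> * vv a (i-1) x))) * gv a (i-1) k
   + (Ck \<epsilon> (HH n a x) (vv a (i-1) x) (vv a i x) * \<epsilon> * x i * (-2/(1 - \<epsilon> * HH n a x + 2 * \<epsilon> * vv a i x))) * gv a i k
   + (Ck \<epsilon> (HH n a x) (vv a (i-1) x) (vv a i x) * \<epsilon> * x i * dN \<epsilon> (HH n a x) (vv a (i-1) x) (vv a i x)) * gv a n k"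
proof -
  define H where "H = HH n a x"
  define E0 where "E0 = 1 - \<epsilon> * H + 2 * \<epsilon> * vv a (i-1) x"
  define G0 where "G0 = 1 - \<epsilon> * H + 2 * \<epsilon> * vv a i x"
  define gn where "gn = gv a n k"
  define g0 where "g0 = gv a (i-1) k"
  define g1 where "g1 = gv a i k"
  have E0: "E0 \<noteq> 0" and G0: "G0 \<noteq> 0" using nz0 nz1 by (auto simp: E0_def G0_def H_def)
  have feq: "(\<lambda>t. kahan n a \<epsilon> i (x(k:=t))) = (\<lambda>t. (x i + ev i k*(t - x k)) *
     (((1-\<epsilon>*H) + (-\<epsilon>*gn)*(t - x k)) * ((1+\<epsilon>*H) + (\<epsilon>*gn)*(t - x k))) /
     ((E0 + (2*\<epsilon>*g0 - \<epsilon>*gn)*(t - x k)) * (G0 + (2*\<epsilon>*g1 - \<epsilon>*gn)*(t - x k))))"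
  proof (rule ext)
    fix t
    have 1: "(x(k:=t)) i = x i + ev i k*(t - x k)" by (simp add: ev_def)
    have 2: "HH n a (x(k:=t)) = H + gn * (t - x k)" using k by (simp add: HH_def H_def gn_def vv_upd)
    have 3: "vv a (i-1) (x(k:=t)) = vv a (i-1) x + g0 * (t - x k)" using k by (simp add: g0_def vv_upd)
    have 4: "vv a i (x(k:=t)) = vv a i x + g1 * (t - x k)" using k by (simp add: g1_def vv_upd)
    have a: "1 - \<epsilon> * HH n a (x(k:=t)) = (1-\<epsilon>*H) + (-\<epsilon>*gn)*(t - x k)" by (simp add: 2 algebra_simps)
    have b: "1 + \<epsilon> * HH n a (x(k:=t)) = (1+\<epsilon>*H) + (\<epsilon>*gn)*(t - x k)" by (simp add: 2 algebra_simps)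
    have c: "(1-\<epsilon>*H) + (-\<epsilon>*gn)*(t - x k) + 2 * \<epsilon> * vv a (i-1) (x(k:=t)) = E0 + (2*\<epsilon>*g0 - \<epsilon>*gn)*(t - x k)"
      unfolding 3 E0_def by (simp add: algebra_simps)
    have d: "(1-\<epsilon>*H) + (-\<epsilon>*gn)*(t - x k) + 2 * \<epsilon> * vv a i (x(k:=t)) = G0 + (2*\<epsilon>*g1 - \<epsilon>*gn)*(t - x k)"
      unfolding 4 G0_def by (simp add: algebra_simps)
    show "kahan n a \<epsilon> i (x(k:=t)) = (x i + ev i k*(t - x k)) *
     (((1-\<epsilon>*H) + (-\<epsilon>*gn)*(t - x k)) * ((1+\<epsilon>*H) + (\<epsilon>*gn)*(t - x k))) /
     ((E0 + (2*\<epsilon>*g0 - \<epsilon>*gn)*(t - x k)) * (G0 + (2*\<epsilon>*g1 - \<epsilon>*gn)*(t - x k)))"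
      unfolding kahan_def 1 a b c d ..
  qed
  have "partial (kahan n a \<epsilon> i) k x = ev i k*((1-\<epsilon>*H)*(1+\<epsilon>*H))/(E0*G0)
     + x i*((-\<epsilon>*gn)*(1+\<epsilon>*H)+(1-\<epsilon>*H)*(\<epsilon>*gn))/(E0*G0)
     - x i*((1-\<epsilon>*H)*(1+\<epsilon>*H))*((2*\<epsilon>*g0 - \<epsilon>*gn)*G0+E0*(2*\<epsilon>*g1 - \<epsilon>*gn))/(E0*G0)^2"
    unfolding partial_def feq
    by (rule DERIV_imp_deriv, rule deriv_rat[OF E0 G0])
  also have "\<dots> = Ck \<epsilon> H (vv a (i-1) x) (vv a i x) * ev i k
   + (Ck \<epsilon> H (vv a (i-1) x) (vv a i x) * \<epsilon> * x i * (-2/E0)) * g0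
   + (Ck \<epsilon> H (vv a (i-1) x) (vv a i x) * \<epsilon> * x i * (-2/G0)) * g1
   + (Ck \<epsilon> H (vv a (i-1) x) (vv a i x) * \<epsilon> * x i * dN \<epsilon> H (vv a (i-1) x) (vv a i x)) * gn"
  proof -
    define Aa where "Aa = 1 - \<epsilon>*H"
    define Bb where "Bb = 1 + \<epsilon>*H"
    have Aa: "Aa \<noteq> 0" and Bb: "Bb \<noteq> 0" using nzA nzB by (simp_all add: Aa_def Bb_def H_def)
    have C: "Ck \<epsilon> H (vv a (i-1) x) (vv a i x) = Aa*Bb/(E0*G0)"
      unfolding Ck_def E0_def G0_def Aa_def Bb_def ..
    have dd: "dN \<epsilon> H (vv a (i-1) x) (vv a i x) = 1/Bb - 1/Aa + 1/E0 + 1/G0"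
      unfolding dN_def E0_def G0_def Aa_def Bb_def ..
    show ?thesis unfolding C dd Aa_def[symmetric] Bb_def[symmetric]
      using E0 G0 Aa Bb by (simp add: field_simps power2_eq_square)
  qed
  finally show ?thesis by (simp add: H_def g0_def g1_def gn_def E0_def G0_def)
qed

lemma vv_Suc: "vv a (Suc m) x = vv a m x + a (Suc m) * x (Suc m)"
  by (simp add: vv_def)

lemma F_lemma:
  assumes "1 \<le> i"
  shows "(\<Sum>l=1..m. pstruct i l x * a l) = x i * (if i \<le> m then vv a m x - vv a i x - vv a (i-1) x else - vv a m x)"
proof (induction m)
  case 0 then show ?case using assms by (simp add: vv_def)
next
  case (Suc m)
  consider "Suc m < i" | "Suc m = i" | "Suc m > i" by linarith
  then show ?case
  proof cases
    case 1 then show ?thesis using Suc by (simp add: vv_Suc pstruct_def algebra_simps)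
  next
    case 2 then show ?thesis using Suc by (auto simp add: vv_Suc pstruct_def algebra_simps)
  next
    case 3 then show ?thesis using Suc by (auto simp add: vv_Suc pstruct_def algebra_simps)
  qed
qed

lemma sum_gv: "m \<le> n \<Longrightarrow> (\<Sum>l=1..n. f l * gv a m l) = (\<Sum>l=1..m. f l * a l)"
  by (rule sum.mono_neutral_cong_right) (auto simp: gv_def)

lemma BB_ev_left: "i \<in> {1..n} \<Longrightarrow> BB n x (ev i) w = (\<Sum>l=1..n. pstruct i l x * w l)"
proof -
  assume i: "i \<in> {1..n}"
  have "BB n x (ev i) w = (\<Sum>k=1..n. if k = i then (\<Sum>l=1..n. pstruct i l x * w l) else 0)"
    unfolding BB_def by (rule sum.cong) (auto simp: ev_def)
  also have "\<dots> = (\<Sum>l=1..n. pstruct i l x * w l)" using i by simp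
  finally show ?thesis .
qed

lemma BB_antisym: "BB n x u w = - BB n x w u"
proof -
  have "BB n x w u = (\<Sum>l=1..n. \<Sum>k=1..n. pstruct l k x * w l * u k)" by (simp add: BB_def)
  also have "\<dots> = (\<Sum>k=1..n. \<Sum>l=1..n. pstruct l k x * w l * u k)" by (rule sum.swap)
  also have "\<dots> = (\<Sum>k=1..n. \<Sum>l=1..n. - (pstruct k l x * u k * w l))"
    by (intro sum.cong refl) (auto simp: pstruct_def)
  also have "\<dots> = - BB n x u w" by (simp add: BB_def sum_negf)
  finally show ?thesis by simp
qed

lemma BB_eg: "1 \<le> i \<Longrightarrow> i \<le> n \<Longrightarrow> m \<le> n \<Longrightarrow>
  BB n x (ev i) (gv a m) = x i * (if i \<le> m then vv a m x - vv a i x - vv a (i-1) x else - vv a m x)"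
  apply (subst BB_ev_left, simp)
  apply (subst sum_gv, assumption)
  apply (rule F_lemma, assumption)
  done

lemma G_lemma: "m \<le> p \<Longrightarrow> (\<Sum>k=1..m. x k * (vv a p x - vv a k x - vv a (k-1) x) * a k) = vv a m x * (vv a p x - vv a m x)"
proof (induction m)
  case 0 then show ?case by (simp add: vv_def)
next
  case (Suc m) then show ?case by (simp add: vv_Suc algebra_simps)
qed

lemma BB_gg: assumes "m \<le> p" "p \<le> n"
  shows "BB n x (gv a m) (gv a p) = vv a m x * (vv a p x - vv a m x)"
proof -
  have "BB n x (gv a m) (gv a p) = (\<Sum>k=1..n. (\<Sum>l=1..n. pstruct k l x * gv a p l) * gv a m k)"
    unfolding BB_def sum_distrib_right by (simp add: mult_ac)
  also have "\<dots> = (\<Sum>k=1..m. (\<Sum>l=1..n. pstruct k l x * gv a p l) * a k)"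
    using assms by (intro sum_gv) linarith
  also have "\<dots> = (\<Sum>k=1..m. x k * (vv a p x - vv a k x - vv a (k-1) x) * a k)"
  proof (intro sum.cong refl)
    fix k assume k: "k \<in> {1..m}"
    have "(\<Sum>l=1..n. pstruct k l x * gv a p l) = (\<Sum>l=1..p. pstruct k l x * a l)"
      using assms by (intro sum_gv) linarith
    also have "\<dots> = x k * (vv a p x - vv a k x - vv a (k-1) x)"
      using k assms by (subst F_lemma) auto
    finally show "(\<Sum>l=1..n. pstruct k l x * gv a p l) * a k = x k * (vv a p x - vv a k x - vv a (k-1) x) * a k" by simp
  qed
  also have "\<dots> = vv a m x * (vv a p x - vv a m x)" using assms by (intro G_lemma) simp
  finally show ?thesis .
qed

lemma BB_lin_l: "BB n x (\<lambda>k. c1 * u1 k + c2 * u2 k + c3 * u3 k + c4 * u4 k) w =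
   c1 * BB n x u1 w + c2 * BB n x u2 w + c3 * BB n x u3 w + c4 * BB n x u4 w"
  unfolding BB_def by (simp add: sum.distrib sum_distrib_left algebra_simps)

lemma BB_lin_r: "BB n x w (\<lambda>k. c1 * u1 k + c2 * u2 k + c3 * u3 k + c4 * u4 k) =
   c1 * BB n x w u1 + c2 * BB n x w u2 + c3 * BB n x w u3 + c4 * BB n x w u4"
  unfolding BB_def by (simp add: sum.distrib sum_distrib_left algebra_simps)


lemma T_zero:
  fixes E e0 e1 f0 f1 cn c0 c1 dn d0 d1 :: real
  assumes nA: "1-E \<noteq> 0" and nB: "1+E \<noteq> 0" and nP: "1-E+2*e0 \<noteq> 0" and nQ: "1-E+2*e1 \<noteq> 0"
    and nR: "1-E+2*f0 \<noteq> 0" and nS: "1-E+2*f1 \<noteq> 0"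
    and cn: "cn = 1/(1+E) - 1/(1-E) + 1/(1-E+2*f0) + 1/(1-E+2*f1)"
    and c0: "c0 = -2/(1-E+2*f0)" and c1: "c1 = -2/(1-E+2*f1)"
    and dn: "dn = 1/(1+E) - 1/(1-E) + 1/(1-E+2*e0) + 1/(1-E+2*e1)"
    and d0: "d0 = -2/(1-E+2*e0)" and d1: "d1 = -2/(1-E+2*e1)"
  shows "cn*(E-e1-e0)+c0*(f0-e1-e0)+c1*(f1-e1-e0)-dn*(E-f1-f0)+d0*e0+d1*e1+d0*c0*e0*(f0-e0)+d0*c1*e0*(f1-e0)+d0*cn*e0*(E-e0)+d1*c0*e1*(f0-e1)+d1*c1*e1*(f1-e1)+d1*cn*e1*(E-e1)-dn*c0*f0*(E-f0)-dn*c1*f1*(E-f1) = 0"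
proof -
  define A where "A = 1-E"
  define B where "B = 1+E"
  define P where "P = 1-E+2*e0"
  define Q where "Q = 1-E+2*e1"
  define R where "R = 1-E+2*f0"
  define S where "S = 1-E+2*f1"
  define \<Sigma> where "\<Sigma> = 1/P + 1/Q"
  define \<Sigma>' where "\<Sigma>' = 1/R + 1/S"
  note nz = nA[folded A_def] nB[folded B_def] nP[folded P_def] nQ[folded Q_def] nR[folded R_def] nS[folded S_def]
  have eqs: "e0 = (P - A)/2" "e1 = (Q - A)/2" "f0 = (R - A)/2" "f1 = (S - A)/2" "E = 1 - A" "B = 2 - A"
    by (simp_all add: A_def B_def P_def Q_def R_def S_def)
  have d0e0: "d0*e0 = A/P - 1" using nz unfolding d0 P_def[symmetric] by (simp add: field_simps P_def A_def)
  have d1e1: "d1*e1 = A/Q - 1" using nz unfolding d1 Q_def[symmetric] by (simp add: field_simps Q_def A_def)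
  have split: "cn*(E-e1-e0)+c0*(f0-e1-e0)+c1*(f1-e1-e0)-dn*(E-f1-f0)+d0*e0+d1*e1+d0*c0*e0*(f0-e0)+d0*c1*e0*(f1-e0)+d0*cn*e0*(E-e0)+d1*c0*e1*(f0-e1)+d1*c1*e1*(f1-e1)+d1*cn*e1*(E-e1)-dn*c0*f0*(E-f0)-dn*c1*f1*(E-f1)
    = cn*((E-e1-e0) + (d0*e0)*(E-e0) + (d1*e1)*(E-e1))
    + c0*((f0-e1-e0) + (d0*e0)*(f0-e0) + (d1*e1)*(f0-e1)) - dn*(c0*(f0*(E-f0)))
    + c1*((f1-e1-e0) + (d0*e0)*(f1-e0) + (d1*e1)*(f1-e1)) - dn*(c1*(f1*(E-f1)))
    - dn*(E-f1-f0) + d0*e0 + d1*e1" by (simp add: algebra_simps)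
  have Bn: "(E-e1-e0) + (d0*e0)*(E-e0) + (d1*e1)*(E-e1) = A*B/2*\<Sigma> - 1"
    unfolding d0e0 d1e1 \<Sigma>_def using nz unfolding eqs by (simp add: field_simps)
  have B0: "c0*((f0-e1-e0) + (d0*e0)*(f0-e0) + (d1*e1)*(f0-e1)) = 1 + A/R - A*\<Sigma>"
    unfolding d0e0 d1e1 \<Sigma>_def c0 R_def[symmetric] using nz unfolding eqs by (simp add: field_simps)
  have B1: "c1*((f1-e1-e0) + (d0*e0)*(f1-e0) + (d1*e1)*(f1-e1)) = 1 + A/S - A*\<Sigma>"
    unfolding d0e0 d1e1 \<Sigma>_def c1 S_def[symmetric] using nz unfolding eqs by (simp add: field_simps)
  have F0: "c0*(f0*(E-f0)) = -(1 - R/2 - A*B/(2*R))"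
    unfolding c0 R_def[symmetric] using nz unfolding eqs by (simp add: field_simps)
  have F1: "c1*(f1*(E-f1)) = -(1 - S/2 - A*B/(2*S))"
    unfolding c1 S_def[symmetric] using nz unfolding eqs by (simp add: field_simps)
  have Ef: "E-f1-f0 = 1 - (R+S)/2" by (simp add: R_def S_def field_simps)
  have cnd: "cn = 1/B - 1/A + \<Sigma>'" "dn = 1/B - 1/A + \<Sigma>"
    unfolding cn dn \<Sigma>_def \<Sigma>'_def A_def B_def P_def Q_def R_def S_def by simp_all
  have AB: "A - B = -2*E" "1 - A = E" by (simp_all add: A_def B_def)
  have "cn*(A*B/2*\<Sigma> - 1) + (1 + A/R - A*\<Sigma>) - dn*(-(1 - R/2 - A*B/(2*R))) + (1 + A/S - A*\<Sigma>) - dn*(-(1 - S/2 - A*B/(2*S)))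
     - dn*(1 - (R+S)/2) + (A/P - 1) + (A/Q - 1) = 0"
  proof -
    have "cn*(A*B/2*\<Sigma> - 1) + (1 + A/R - A*\<Sigma>) - dn*(-(1 - R/2 - A*B/(2*R))) + (1 + A/S - A*\<Sigma>) - dn*(-(1 - S/2 - A*B/(2*S)))
     - dn*(1 - (R+S)/2) + (A/P - 1) + (A/Q - 1) = (A*B/2)*(cn*\<Sigma> - dn*\<Sigma>') + (dn - cn) + A*\<Sigma>' - A*\<Sigma>"
      using nz unfolding \<Sigma>'_def \<Sigma>_def by (simp add: field_simps)
    also have "\<dots> = 0" unfolding cnd using nz by (simp add: field_simps) (simp add: A_def B_def algebra_simps)
    finally show ?thesis .
  qed
  then show ?thesis
    apply (subst split)
    apply (unfold Bn B0 B1 F0 F1 Ef)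
    apply (unfold d0e0 d1e1)
    apply assumption
    done
qed


lemma BB_ee: "i \<in> {1..n} \<Longrightarrow> j \<in> {1..n} \<Longrightarrow> BB n x (ev i) (ev j) = pstruct i j x"
proof -
  assume i: "i \<in> {1..n}" and j: "j \<in> {1..n}"
  have "BB n x (ev i) (ev j) = (\<Sum>l=1..n. pstruct i l x * ev j l)"
    using i by (rule BB_ev_left)
  also have "\<dots> = (\<Sum>l=1..n. if l = j then pstruct i j x else 0)"
    by (rule sum.cong) (auto simp: ev_def)
  also have "\<dots> = pstruct i j x" using j by simp
  finally show ?thesis .
qed

theorem proposition3p2:
  fixes n :: nat and a x :: "nat \<Rightarrow> real" and \<epsilon> :: real and i j :: nat
  assumes "\<exists>k\<in>{1..n}. a k \<noteq> 0"
    and "\<epsilon> > 0"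
    and "\<forall>k\<le>n. 1 - \<epsilon> * HH n a x + 2 * \<epsilon> * vv a k x \<noteq> 0"
    and "1 \<le> i" and "i < j" and "j \<le> n"
  shows "pbracket n (kahan n a \<epsilon> i) (kahan n a \<epsilon> j) x = kahan n a \<epsilon> i x * kahan n a \<epsilon> j x"
proof -
  note nz = assms(3)
  have ij: "1 \<le> i" "i < j" "j \<le> n" using assms by auto
  define H where "H = HH n a x"
  have Hv: "vv a n x = H" by (simp add: H_def HH_def)
  have nzA: "1 - \<epsilon> * H \<noteq> 0" using nz[rule_format, of 0] by (simp add: vv_def H_def)
  have nzB: "1 + \<epsilon> * H \<noteq> 0" using nz[rule_format, of n] by (simp add: Hv H_def algebra_simps)
  define V0 where "V0 = vv a (i-1) x"
  define V1 where "V1 = vv a i x"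
  define W0 where "W0 = vv a (j-1) x"
  define W1 where "W1 = vv a j x"
  have nV0: "1 - \<epsilon> * H + 2 * \<epsilon> * V0 \<noteq> 0" using nz ij unfolding V0_def H_def by auto
  have nV1: "1 - \<epsilon> * H + 2 * \<epsilon> * V1 \<noteq> 0" using nz ij unfolding V1_def H_def by auto
  have nW0: "1 - \<epsilon> * H + 2 * \<epsilon> * W0 \<noteq> 0" using nz ij unfolding W0_def H_def by auto
  have nW1: "1 - \<epsilon> * H + 2 * \<epsilon> * W1 \<noteq> 0" using nz ij unfolding W1_def H_def by auto
  define ci where "ci = Ck \<epsilon> H V0 V1"
  define cj where "cj = Ck \<epsilon> H W0 W1"
  define d0 where "d0 = -2/(1 - \<epsilon> * H + 2 * \<epsilon> * V0)"
  define d1 where "d1 = -2/(1 - \<epsilon> * H + 2 * \<epsilon> * V1)"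
  define dn where "dn = dN \<epsilon> H V0 V1"
  define c0 where "c0 = -2/(1 - \<epsilon> * H + 2 * \<epsilon> * W0)"
  define c1 where "c1 = -2/(1 - \<epsilon> * H + 2 * \<epsilon> * W1)"
  define cn where "cn = dN \<epsilon> H W0 W1"
  define X where "X = x i"
  define Y where "Y = x j"
  have gi: "\<And>k. k \<in> {1..n} \<Longrightarrow> partial (kahan n a \<epsilon> i) k x =
     ci * ev i k + (ci*\<epsilon>*X*d0) * gv a (i-1) k + (ci*\<epsilon>*X*d1) * gv a i k + (ci*\<epsilon>*X*dn) * gv a n k"
    unfolding ci_def d0_def d1_def dn_def X_def V0_def V1_def H_def
    by (rule grad_kahan) (use nzA nzB nV0 nV1 in \<open>auto simp: H_def V0_def V1_def\<close>)
  have gj: "\<And>k. k \<in> {1..n} \<Longrightarrow> partial (kahan n a \<epsilon> j) k x =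
     cj * ev j k + (cj*\<epsilon>*Y*c0) * gv a (j-1) k + (cj*\<epsilon>*Y*c1) * gv a j k + (cj*\<epsilon>*Y*cn) * gv a n k"
    unfolding cj_def c0_def c1_def cn_def Y_def W0_def W1_def H_def
    by (rule grad_kahan) (use nzA nzB nW0 nW1 in \<open>auto simp: H_def W0_def W1_def\<close>)
  have pb: "pbracket n (kahan n a \<epsilon> i) (kahan n a \<epsilon> j) x =
    BB n x (\<lambda>k. ci * ev i k + (ci*\<epsilon>*X*d0) * gv a (i-1) k + (ci*\<epsilon>*X*d1) * gv a i k + (ci*\<epsilon>*X*dn) * gv a n k)
           (\<lambda>k. cj * ev j k + (cj*\<epsilon>*Y*c0) * gv a (j-1) k + (cj*\<epsilon>*Y*c1) * gv a j k + (cj*\<epsilon>*Y*cn) * gv a n k)"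
    unfolding pbracket_def BB_def by (intro sum.cong refl) (simp add: gi gj)
  have iI: "i \<in> {1..n}" and jI: "j \<in> {1..n}" using ij by auto
  have b11: "BB n x (ev i) (ev j) = X*Y" using BB_ee[OF iI jI] ij by (simp add: pstruct_def X_def Y_def)
  have b12: "BB n x (ev i) (gv a (j-1)) = X*(W0-V1-V0)" using ij by (subst BB_eg) (auto simp: X_def W0_def V1_def V0_def)
  have b13: "BB n x (ev i) (gv a j) = X*(W1-V1-V0)" using ij by (subst BB_eg) (auto simp: X_def W1_def V1_def V0_def)
  have b14: "BB n x (ev i) (gv a n) = X*(H-V1-V0)" using ij by (subst BB_eg) (auto simp: X_def Hv V1_def V0_def)
  have b21: "BB n x (gv a (i-1)) (ev j) = -(Y*(-V0))" using ij
    by (subst BB_antisym, subst BB_eg) (auto simp: Y_def V0_def)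
  have b31: "BB n x (gv a i) (ev j) = -(Y*(-V1))" using ij
    by (subst BB_antisym, subst BB_eg) (auto simp: Y_def V1_def)
  have b41: "BB n x (gv a n) (ev j) = -(Y*(H-W1-W0))" using ij
    by (subst BB_antisym, subst BB_eg) (auto simp: Y_def Hv W1_def W0_def)
  have b22: "BB n x (gv a (i-1)) (gv a (j-1)) = V0*(W0-V0)" using ij by (subst BB_gg) (auto simp: V0_def W0_def)
  have b23: "BB n x (gv a (i-1)) (gv a j) = V0*(W1-V0)" using ij by (subst BB_gg) (auto simp: V0_def W1_def)
  have b24: "BB n x (gv a (i-1)) (gv a n) = V0*(H-V0)" using ij by (subst BB_gg) (auto simp: V0_def Hv)
  have b32: "BB n x (gv a i) (gv a (j-1)) = V1*(W0-V1)" using ij by (subst BB_gg) (auto simp: V1_def W0_def)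
  have b33: "BB n x (gv a i) (gv a j) = V1*(W1-V1)" using ij by (subst BB_gg) (auto simp: V1_def W1_def)
  have b34: "BB n x (gv a i) (gv a n) = V1*(H-V1)" using ij by (subst BB_gg) (auto simp: V1_def Hv)
  have b42: "BB n x (gv a n) (gv a (j-1)) = -(W0*(H-W0))" using ij
    by (subst BB_antisym, subst BB_gg) (auto simp: W0_def Hv)
  have b43: "BB n x (gv a n) (gv a j) = -(W1*(H-W1))" using ij
    by (subst BB_antisym, subst BB_gg) (auto simp: W1_def Hv)
  have b44: "BB n x (gv a n) (gv a n) = H*(H-H)" by (subst BB_gg) (auto simp: Hv)
  have T: "cn*(\<epsilon>*H-\<epsilon>*V1-\<epsilon>*V0)+c0*(\<epsilon>*W0-\<epsilon>*V1-\<epsilon>*V0)+c1*(\<epsilon>*W1-\<epsilon>*V1-\<epsilon>*V0)-dn*(\<epsilon>*H-\<epsilon>*W1-\<epsilon>*W0)+d0*(\<epsilon>*V0)+d1*(\<epsilon>*V1)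
    +d0*c0*(\<epsilon>*V0)*(\<epsilon>*W0-\<epsilon>*V0)+d0*c1*(\<epsilon>*V0)*(\<epsilon>*W1-\<epsilon>*V0)+d0*cn*(\<epsilon>*V0)*(\<epsilon>*H-\<epsilon>*V0)
    +d1*c0*(\<epsilon>*V1)*(\<epsilon>*W0-\<epsilon>*V1)+d1*c1*(\<epsilon>*V1)*(\<epsilon>*W1-\<epsilon>*V1)+d1*cn*(\<epsilon>*V1)*(\<epsilon>*H-\<epsilon>*V1)
    -dn*c0*(\<epsilon>*W0)*(\<epsilon>*H-\<epsilon>*W0)-dn*c1*(\<epsilon>*W1)*(\<epsilon>*H-\<epsilon>*W1) = 0"
    by (rule T_zero) (use nzA nzB nV0 nV1 nW0 nW1 in
        \<open>simp_all add: cn_def c0_def c1_def dn_def d0_def d1_def dN_def mult.assoc\<close>)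
  have ki: "kahan n a \<epsilon> i x = X * ci"
    unfolding kahan_def ci_def Ck_def X_def V0_def V1_def H_def by simp
  have kj: "kahan n a \<epsilon> j x = Y * cj"
    unfolding kahan_def cj_def Ck_def Y_def W0_def W1_def H_def by simp
  show ?thesis
    unfolding pb BB_lin_l BB_lin_r b11 b12 b13 b14 b21 b31 b41 b22 b23 b24 b32 b33 b34 b42 b43 b44 ki kj
  proof -
    let ?T = "cn*(\<epsilon>*H-\<epsilon>*V1-\<epsilon>*V0)+c0*(\<epsilon>*W0-\<epsilon>*V1-\<epsilon>*V0)+c1*(\<epsilon>*W1-\<epsilon>*V1-\<epsilon>*V0)-dn*(\<epsilon>*H-\<epsilon>*W1-\<epsilon>*W0)+d0*(\<epsilon>*V0)+d1*(\<epsilon>*V1)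
    +d0*c0*(\<epsilon>*V0)*(\<epsilon>*W0-\<epsilon>*V0)+d0*c1*(\<epsilon>*V0)*(\<epsilon>*W1-\<epsilon>*V0)+d0*cn*(\<epsilon>*V0)*(\<epsilon>*H-\<epsilon>*V0)
    +d1*c0*(\<epsilon>*V1)*(\<epsilon>*W0-\<epsilon>*V1)+d1*c1*(\<epsilon>*V1)*(\<epsilon>*W1-\<epsilon>*V1)+d1*cn*(\<epsilon>*V1)*(\<epsilon>*H-\<epsilon>*V1)
    -dn*c0*(\<epsilon>*W0)*(\<epsilon>*H-\<epsilon>*W0)-dn*c1*(\<epsilon>*W1)*(\<epsilon>*H-\<epsilon>*W1)"
    have "ci * (cj * (X * Y) + cj * \<epsilon> * Y * c0 * (X * (W0 - V1 - V0)) + cj * \<epsilon> * Y * c1 * (X * (W1 - V1 - V0)) + cj * \<epsilon> * Y * cn * (X * (H - V1 - V0))) +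
    ci * \<epsilon> * X * d0 * (cj * - (Y * - V0) + cj * \<epsilon> * Y * c0 * (V0 * (W0 - V0)) + cj * \<epsilon> * Y * c1 * (V0 * (W1 - V0)) + cj * \<epsilon> * Y * cn * (V0 * (H - V0))) +
    ci * \<epsilon> * X * d1 * (cj * - (Y * - V1) + cj * \<epsilon> * Y * c0 * (V1 * (W0 - V1)) + cj * \<epsilon> * Y * c1 * (V1 * (W1 - V1)) + cj * \<epsilon> * Y * cn * (V1 * (H - V1))) +
    ci * \<epsilon> * X * dn * (cj * - (Y * (H - W1 - W0)) + cj * \<epsilon> * Y * c0 * - (W0 * (H - W0)) + cj * \<epsilon> * Y * c1 * - (W1 * (H - W1)) + cj * \<epsilon> * Y * cn * (H * (H - H)))
    = X * ci * (Y * cj) * (1 + ?T)" by (simp add: algebra_simps)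
    also have "\<dots> = X * ci * (Y * cj)" using T by simp
    finally show "ci * (cj * (X * Y) + cj * \<epsilon> * Y * c0 * (X * (W0 - V1 - V0)) + cj * \<epsilon> * Y * c1 * (X * (W1 - V1 - V0)) + cj * \<epsilon> * Y * cn * (X * (H - V1 - V0))) +
    ci * \<epsilon> * X * d0 * (cj * - (Y * - V0) + cj * \<epsilon> * Y * c0 * (V0 * (W0 - V0)) + cj * \<epsilon> * Y * c1 * (V0 * (W1 - V0)) + cj * \<epsilon> * Y * cn * (V0 * (H - V0))) +
    ci * \<epsilon> * X * d1 * (cj * - (Y * - V1) + cj * \<epsilon> * Y * c0 * (V1 * (W0 - V1)) + cj * \<epsilon> * Y * c1 * (V1 * (W1 - V1)) + cj * \<epsilon> * Y * cn * (V1 * (H - V1))) +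
    ci * \<epsilon> * X * dn * (cj * - (Y * (H - W1 - W0)) + cj * \<epsilon> * Y * c0 * - (W0 * (H - W0)) + cj * \<epsilon> * Y * c1 * - (W1 * (H - W1)) + cj * \<epsilon> * Y * cn * (H * (H - H)))
    = X * ci * (Y * cj)" .
  qed
qed

end
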